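(* Let $\Omega\subset\mathbb{R}^d$ with $\rho(x,y)=\|x-y\|_2$ and $\operatorname{diam}(\Omega)\le D$. Then for every $n\ge1$, $$G_n(\mathcal{F}_{BL})\le\begin{cases}\dfrac{9\sqrt{\log(2\sqrt n)}\,D}{\sqrt n}, & d=1,\\[2mm] \dfrac{10D\log(2\sqrt n)^{3/2}}{\sqrt n}, & d=2,\\[2mm] \dfrac{10D\sqrt{\log\big(2n^{1/d}(d/2-1)^{2/d}\big)}}{n^{1/d}(d/2-1)^{2/d}}, & d\ge3.\end{cases}$$
   Context: $\mathcal{F}_{BL}=\{f:\Omega\to\mathbb{R}:\|f\|_\infty\le\operatorname{diam}(\Omega),\ |f(z_1)-f(z_2)|\le\|z_1-z_2\|_2\ \forall z_1,z_2\}$. The Gaussian complexity is $G_n(\mathcal{F})=\sup_{z_1,\dots,z_n\in\Omega}\mathbb{E}_{x_i\overset{iid}{\sim}\mathcal{N}(0,1)}\big[\sup_{f\in\mathcal{F}}\frac1n|\sum_i x_if(z_i)|\big]$. *)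

theory Defs
  imports "HOL-Probability.Probability"
begin

definition F_BL :: "'a::euclidean_space set \<Rightarrow> ('a \<Rightarrow> real) set" where
  "F_BL \<Omega> = {f. (\<forall>z\<in>\<Omega>. \<bar>f z\<bar> \<le> diameter \<Omega>) \<and>
                  (\<forall>z1\<in>\<Omega>. \<forall>z2\<in>\<Omega>. \<bar>f z1 - f z2\<bar> \<le> dist z1 z2)}"

definition gauss_vec :: "nat \<Rightarrow> (nat \<Rightarrow> real) measure" where
  "gauss_vec n = PiM {..<n} (\<lambda>_. density lborel std_normal_density)"

definition gaussian_complexity :: "nat \<Rightarrow> ('a \<Rightarrow> real) set \<Rightarrow> 'a set \<Rightarrow> ennreal" where
  "gaussian_complexity n F \<Omega> =
     (SUP z \<in> {..<n} \<rightarrow>\<^sub>E \<Omega>.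
        \<integral>\<^sup>+ x. (SUP f\<in>F. ennreal (\<bar>\<Sum>i<n. x i * f (z i)\<bar> / real n)) \<partial>gauss_vec n)"

end

theory Submission
  imports Defs
begin

abbreviation "gN \<equiv> density lborel std_normal_density"

lemma prob_gN: "prob_space gN"
  using prob_space_normal_density by simp

lemma gN_int_id: "integrable gN (\<lambda>t. t) \<and> integral\<^sup>L gN (\<lambda>t. t) = 0"
proof -
  have m: "std_normal_density \<in> borel_measurable lborel" by simp
  have "integrable lborel (\<lambda>x. std_normal_density x * x^1)"
    by (rule integrable_std_normal_moment)
  moreover have "integral\<^sup>L lborel (\<lambda>x. std_normal_density x * x^(2*0+1)) = 0"
    by (rule integral_std_normal_moment_odd)
  ultimately show ?thesis
    by (simp add: integrable_density integral_density normal_density_nonneg)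
qed

lemma gN_int_sq: "integrable gN (\<lambda>t. t*t) \<and> integral\<^sup>L gN (\<lambda>t. t*t) = 1"
proof -
  have "integrable lborel (\<lambda>x. std_normal_density x * x^2)"
    by (rule integrable_std_normal_moment)
  moreover have "integral\<^sup>L lborel (\<lambda>x. std_normal_density x * x^(2*1)) = fact (2*1) / (2^1 * fact 1)"
    by (rule integral_std_normal_moment_even)
  ultimately show ?thesis
    by (simp add: integrable_density integral_density normal_density_nonneg power2_eq_square)
qed

lemma gv_prob: "prob_space (gauss_vec n)"
  unfolding gauss_vec_def by (rule prob_space_PiM) (rule prob_gN)

lemma gv_cross:
  assumes "i < n" "k < n"
  shows "integrable (gauss_vec n) (\<lambda>x. x i * x k) \<and>
         integral\<^sup>L (gauss_vec n) (\<lambda>x. x i * x k) = (if i = k then 1 else 0)"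
proof -
  interpret G: prob_space gN by (rule prob_gN)
  interpret P: product_prob_space "\<lambda>_::nat. gN" "{..<n}"
    by (simp add: product_prob_space_def product_prob_space_axioms_def product_sigma_finite_def G.prob_space_axioms G.sigma_finite_measure_axioms)
  define f where "f = (\<lambda>(j::nat) (t::real). (if j = i then t else 1) * (if j = k then t else 1))"
  have fj: "f j = (if j = i \<and> j = k then (\<lambda>t. t*t) else if j = i \<or> j = k then (\<lambda>t. t) else (\<lambda>t. 1))" for j
    by (auto simp: f_def fun_eq_iff)
  have fint: "integrable gN (f j)" for j
    unfolding fj using gN_int_id gN_int_sq by simp
  have eq: "(\<Prod>j\<in>{..<n}. f j (x j)) = x i * x k" for x
  proof -
    have "(\<Prod>j\<in>{..<n}. f j (x j)) = (\<Prod>j\<in>{..<n}. (if j = i then x j else 1)) * (\<Prod>j\<in>{..<n}. (if j = k then x j else 1))"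
      unfolding f_def by (simp only: prod.distrib)
    also have "\<dots> = x i * x k" using assms by (simp only: prod.delta finite_lessThan lessThan_iff if_True)
    finally show ?thesis .
  qed
  have "integrable (Pi\<^sub>M {..<n} (\<lambda>_. gN)) (\<lambda>x. \<Prod>j\<in>{..<n}. f j (x j))"
    by (rule P.product_integrable_prod) (auto intro: fint)
  moreover have "integral\<^sup>L (Pi\<^sub>M {..<n} (\<lambda>_. gN)) (\<lambda>x. \<Prod>j\<in>{..<n}. f j (x j)) = (\<Prod>j\<in>{..<n}. integral\<^sup>L gN (f j))"
    by (rule P.product_integral_prod) (auto intro: fint)
  moreover have "(\<Prod>j\<in>{..<n}. integral\<^sup>L gN (f j)) = (if i = k then 1 else 0)"
  proof -
    have i1: "integral\<^sup>L gN (\<lambda>t. 1::real) = 1" using G.prob_space by simp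
    show ?thesis
    proof (cases "i = k")
      case True
      have "(\<Prod>j\<in>{..<n}. integral\<^sup>L gN (f j)) = (\<Prod>j\<in>{..<n}. if j = i then 1 else 1)"
        by (rule prod.cong) (use True gN_int_sq i1 in \<open>auto simp: fj\<close>)
      then show ?thesis using True by simp
    next
      case False
      have "integral\<^sup>L gN (f i) = 0" using False gN_int_id by (simp add: f_def)
      then have "(\<Prod>j\<in>{..<n}. integral\<^sup>L gN (f j)) = 0" using assms by (intro prod_zero) auto
      then show ?thesis using False by simp
    qed
  qed
  ultimately show ?thesis unfolding gauss_vec_def by (simp add: eq)
qed

lemma gv_cross_int: "i < n \<Longrightarrow> k < n \<Longrightarrow> integrable (gauss_vec n) (\<lambda>x. x i * x k)"
  using gv_cross by blast
lemma gv_cross_val: "i < n \<Longrightarrow> k < n \<Longrightarrow> integral\<^sup>L (gauss_vec n) (\<lambda>x. x i * x k) = (if i = k then 1 else 0)"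
  using gv_cross by blast

lemma gv_sum_sq:
  assumes "I \<subseteq> {..<n}"
  shows "integrable (gauss_vec n) (\<lambda>x. (\<Sum>i\<in>I. x i)^2) \<and>
         integral\<^sup>L (gauss_vec n) (\<lambda>x. (\<Sum>i\<in>I. x i)^2) = real (card I)"
proof -
  have fin: "finite I" using assms finite_subset by blast
  have lt: "i \<in> I \<Longrightarrow> i < n" for i using assms by auto
  have eq: "(\<Sum>i\<in>I. x i)^2 = (\<Sum>i\<in>I. \<Sum>k\<in>I. x i * x k)" for x :: "nat \<Rightarrow> real"
    unfolding power2_eq_square by (rule sum_product)
  have int1: "i \<in> I \<Longrightarrow> integrable (gauss_vec n) (\<lambda>x. \<Sum>k\<in>I. x i * x k)" for i
    by (rule Bochner_Integration.integrable_sum) (simp add: lt gv_cross_int)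
  have int: "integrable (gauss_vec n) (\<lambda>x. \<Sum>i\<in>I. \<Sum>k\<in>I. x i * x k)"
    by (rule Bochner_Integration.integrable_sum) (rule int1)
  have "integral\<^sup>L (gauss_vec n) (\<lambda>x. \<Sum>i\<in>I. \<Sum>k\<in>I. x i * x k)
      = (\<Sum>i\<in>I. integral\<^sup>L (gauss_vec n) (\<lambda>x. \<Sum>k\<in>I. x i * x k))"
    by (rule Bochner_Integration.integral_sum) (rule int1)
  also have "\<dots> = (\<Sum>i\<in>I. \<Sum>k\<in>I. integral\<^sup>L (gauss_vec n) (\<lambda>x. x i * x k))"
    by (intro sum.cong refl Bochner_Integration.integral_sum) (simp add: lt gv_cross_int)
  also have "\<dots> = (\<Sum>i\<in>I. \<Sum>k\<in>I. (if i = k then 1 else 0))"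
    by (intro sum.cong refl) (simp add: lt gv_cross_val)
  also have "\<dots> = real (card I)" using fin by simp
  finally show ?thesis using int by (simp add: eq)
qed

lemma gv_abs_sum:
  assumes "I \<subseteq> {..<n}"
  shows "(\<integral>\<^sup>+x. ennreal \<bar>\<Sum>i\<in>I. x i\<bar> \<partial>gauss_vec n) \<le> ennreal (sqrt (real (card I)))"
proof (cases "I = {}")
  case True then show ?thesis by simp
next
  case False
  interpret P: prob_space "gauss_vec n" by (rule gv_prob)
  have fin: "finite I" using assms finite_subset by blast
  define a where "a = sqrt (real (card I))"
  have a: "a > 0" using False fin by (simp add: a_def card_gt_0_iff)
  have a2: "a * a = real (card I)" by (simp add: a_def)
  have pt: "\<bar>s\<bar> \<le> s^2/(2*a) + a/2" for s :: real
  proof -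
    have "0 \<le> (\<bar>s\<bar> - a)^2" by simp
    then have "2*a*\<bar>s\<bar> \<le> s^2 + a*a" by (simp add: power2_eq_square algebra_simps)
    then show ?thesis using a by (simp add: field_simps power2_eq_square)
  qed
  obtain hi: "integrable (gauss_vec n) (\<lambda>x. (\<Sum>i\<in>I. x i)^2)"
    and he: "integral\<^sup>L (gauss_vec n) (\<lambda>x. (\<Sum>i\<in>I. x i)^2) = real (card I)"
    using gv_sum_sq[OF assms] by blast
  have int2: "integrable (gauss_vec n) (\<lambda>x. (\<Sum>i\<in>I. x i)^2/(2*a) + a/2)"
    using hi by simp
  have "(\<integral>\<^sup>+x. ennreal \<bar>\<Sum>i\<in>I. x i\<bar> \<partial>gauss_vec n)
      \<le> (\<integral>\<^sup>+x. ennreal ((\<Sum>i\<in>I. x i)^2/(2*a) + a/2) \<partial>gauss_vec n)"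
    by (intro nn_integral_mono ennreal_leI pt)
  also have "\<dots> = ennreal (integral\<^sup>L (gauss_vec n) (\<lambda>x. (\<Sum>i\<in>I. x i)^2/(2*a) + a/2))"
    using int2 a by (intro nn_integral_eq_integral) auto
  also have "integral\<^sup>L (gauss_vec n) (\<lambda>x. (\<Sum>i\<in>I. x i)^2/(2*a) + a/2) = real (card I)/(2*a) + a/2"
    using hi he by (simp add: P.prob_space)
  also have "real (card I)/(2*a) + a/2 = a" using a a2 by (simp add: field_simps)
  finally show ?thesis by (simp add: a_def)
qed

lemma gv_meas_S:
  assumes "J \<subseteq> {..<n}"
  shows "(\<lambda>x. \<Sum>i\<in>J. x i) \<in> borel_measurable (gauss_vec n)"
  unfolding gauss_vec_def
  by (rule borel_measurable_sum) (use assms in \<open>auto intro!: measurable_component_singleton\<close>)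

lemma E_lin:
  assumes "finite F" "\<And>j. j \<in> F \<Longrightarrow> w j \<ge> 0" "\<And>j. j \<in> F \<Longrightarrow> J j \<subseteq> {..<n}"
  shows "(\<lambda>x. ennreal (\<Sum>j\<in>F. w j * \<bar>\<Sum>i\<in>J j. x i\<bar>)) \<in> borel_measurable (gauss_vec n)"
    and "(\<integral>\<^sup>+x. ennreal (\<Sum>j\<in>F. w j * \<bar>\<Sum>i\<in>J j. x i\<bar>) \<partial>gauss_vec n)
           \<le> ennreal (\<Sum>j\<in>F. w j * sqrt (real (card (J j))))"
proof -
  have mj: "(\<lambda>x. ennreal (w j * \<bar>\<Sum>i\<in>J j. x i\<bar>)) \<in> borel_measurable (gauss_vec n)" if "j \<in> F" for j
    using gv_meas_S[OF assms(3)[OF that]] by measurable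
  have eq: "ennreal (\<Sum>j\<in>F. w j * \<bar>\<Sum>i\<in>J j. x i\<bar>) = (\<Sum>j\<in>F. ennreal (w j * \<bar>\<Sum>i\<in>J j. x i\<bar>))" for x
    using assms(2) by (subst sum_ennreal) auto
  show "(\<lambda>x. ennreal (\<Sum>j\<in>F. w j * \<bar>\<Sum>i\<in>J j. x i\<bar>)) \<in> borel_measurable (gauss_vec n)"
    unfolding eq by (rule borel_measurable_sum) (rule mj)
  have "(\<integral>\<^sup>+x. ennreal (\<Sum>j\<in>F. w j * \<bar>\<Sum>i\<in>J j. x i\<bar>) \<partial>gauss_vec n)
      = (\<Sum>j\<in>F. \<integral>\<^sup>+x. ennreal (w j * \<bar>\<Sum>i\<in>J j. x i\<bar>) \<partial>gauss_vec n)"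
    unfolding eq by (rule nn_integral_sum) (rule mj)
  also have "\<dots> \<le> (\<Sum>j\<in>F. ennreal (w j * sqrt (real (card (J j)))))"
  proof (rule sum_mono)
    fix j assume j: "j \<in> F"
    have "(\<integral>\<^sup>+x. ennreal (w j * \<bar>\<Sum>i\<in>J j. x i\<bar>) \<partial>gauss_vec n)
        = ennreal (w j) * (\<integral>\<^sup>+x. ennreal \<bar>\<Sum>i\<in>J j. x i\<bar> \<partial>gauss_vec n)"
      using assms(2)[OF j] gv_meas_S[OF assms(3)[OF j]]
      by (subst nn_integral_cmult[symmetric]) (auto simp: ennreal_mult)
    also have "\<dots> \<le> ennreal (w j) * ennreal (sqrt (real (card (J j))))"
      by (intro mult_left_mono gv_abs_sum assms(3) j) simp
    also have "\<dots> = ennreal (w j * sqrt (real (card (J j))))"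
      using assms(2)[OF j] by (simp add: ennreal_mult)
    finally show "(\<integral>\<^sup>+x. ennreal (w j * \<bar>\<Sum>i\<in>J j. x i\<bar>) \<partial>gauss_vec n) \<le> ennreal (w j * sqrt (real (card (J j))))" .
  qed
  also have "\<dots> = ennreal (\<Sum>j\<in>F. w j * sqrt (real (card (J j))))"
    using assms(2) by (subst sum_ennreal) auto
  finally show "(\<integral>\<^sup>+x. ennreal (\<Sum>j\<in>F. w j * \<bar>\<Sum>i\<in>J j. x i\<bar>) \<partial>gauss_vec n)
           \<le> ennreal (\<Sum>j\<in>F. w j * sqrt (real (card (J j))))" .
qed

lemma sum_sqrt_le:
  fixes a :: "'b \<Rightarrow> real"
  assumes "finite P" "\<And>p. p \<in> P \<Longrightarrow> a p \<ge> 0"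
  shows "(\<Sum>p\<in>P. sqrt (a p)) \<le> sqrt (real (card P) * (\<Sum>p\<in>P. a p))"
proof -
  have "(\<Sum>p\<in>P. sqrt (a p))^2 \<le> (\<Sum>p\<in>P. (sqrt (a p))^2) * card P"
    by (rule sum_squared_le_sum_of_squares)
  also have "(\<Sum>p\<in>P. (sqrt (a p))^2) = (\<Sum>p\<in>P. a p)"
    using assms by (intro sum.cong) auto
  finally have "(\<Sum>p\<in>P. sqrt (a p))^2 \<le> real (card P) * (\<Sum>p\<in>P. a p)" by (simp add: mult.commute)
  then show ?thesis
    by (metis real_le_rsqrt sum_nonneg real_sqrt_ge_zero)
qed

definition sepset :: "'a::euclidean_space set \<Rightarrow> real \<Rightarrow> 'a set \<Rightarrow> bool" where
  "sepset \<Omega> \<epsilon> N \<longleftrightarrow> finite N \<and> N \<subseteq> \<Omega> \<and> (\<forall>p\<in>N. \<forall>q\<in>N. p \<noteq> q \<longrightarrow> dist p q > \<epsilon>)"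

lemma sepset_card:
  fixes \<Omega> :: "'a::euclidean_space set"
  assumes "bounded \<Omega>" "z0 \<in> \<Omega>" "diameter \<Omega> \<le> D" "\<epsilon> > 0" "sepset \<Omega> \<epsilon> N"
  shows "real (card N) \<le> (1 + 2*D/\<epsilon>) ^ DIM('a)"
proof -
  let ?d = "DIM('a)"
  let ?V = "unit_ball_vol (real ?d)"
  have fin: "finite N" and sub: "N \<subseteq> \<Omega>" and sep: "\<And>p q. p\<in>N \<Longrightarrow> q\<in>N \<Longrightarrow> p \<noteq> q \<Longrightarrow> dist p q > \<epsilon>"
    using assms(5) unfolding sepset_def by auto
  have D0: "D \<ge> 0" using diameter_ge_0[OF assms(1)] assms(3) by linarith
  have disj: "disjoint_family_on (\<lambda>p. cball p (\<epsilon>/2)) N"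
    unfolding disjoint_family_on_def
  proof (intro ballI impI, rule ccontr)
    fix p q assume pq: "p \<in> N" "q \<in> N" "p \<noteq> q" "cball p (\<epsilon>/2) \<inter> cball q (\<epsilon>/2) \<noteq> {}"
    then obtain y where "dist p y \<le> \<epsilon>/2" "dist q y \<le> \<epsilon>/2" by auto
    then have "dist p q \<le> \<epsilon>" by (metis dist_commute dist_triangle order_trans add_mono field_sum_of_halves)
    with sep[OF pq(1-3)] show False by simp
  qed
  have "(\<Sum>p\<in>N. emeasure lborel (cball p (\<epsilon>/2))) = emeasure lborel (\<Union>p\<in>N. cball p (\<epsilon>/2))"
    by (rule sum_emeasure) (use disj fin in auto)
  also have "\<dots> \<le> emeasure lborel (cball z0 (D + \<epsilon>/2))"
  proof (rule emeasure_mono)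
    show "(\<Union>p\<in>N. cball p (\<epsilon>/2)) \<subseteq> cball z0 (D + \<epsilon>/2)"
    proof
      fix y assume "y \<in> (\<Union>p\<in>N. cball p (\<epsilon>/2))"
      then obtain p where p: "p \<in> N" "dist p y \<le> \<epsilon>/2" by auto
      have "dist z0 p \<le> D" using diameter_bounded_bound[OF assms(1) assms(2)] p(1) sub assms(3) by force
      then show "y \<in> cball z0 (D + \<epsilon>/2)" using p(2) dist_triangle[of z0 y p] by simp
    qed
  qed simp
  finally have "(\<Sum>p\<in>N. ennreal (?V * (\<epsilon>/2) ^ ?d)) \<le> ennreal (?V * (D + \<epsilon>/2) ^ ?d)"
    using assms(4) D0 by (simp add: emeasure_cball)
  then have "ennreal (real (card N) * (?V * (\<epsilon>/2) ^ ?d)) \<le> ennreal (?V * (D + \<epsilon>/2) ^ ?d)"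
    using assms(4) by (simp add: ennreal_mult' ennreal_of_nat_eq_real_of_nat)
  then have le: "real (card N) * (?V * (\<epsilon>/2) ^ ?d) \<le> ?V * (D + \<epsilon>/2) ^ ?d"
    using D0 assms(4) by (subst (asm) ennreal_le_iff) auto
  have Vp: "?V > 0" by simp
  have ep: "(\<epsilon>/2) ^ ?d > 0" using assms(4) by simp
  have "real (card N) \<le> (D + \<epsilon>/2) ^ ?d / (\<epsilon>/2) ^ ?d"
    using le Vp ep by (simp add: field_simps)
  also have "\<dots> = ((D + \<epsilon>/2) / (\<epsilon>/2)) ^ ?d" by (rule power_divide[symmetric])
  also have "(D + \<epsilon>/2) / (\<epsilon>/2) = 1 + 2*D/\<epsilon>" using assms(4) by (simp add: field_simps)
  finally show ?thesis .
qed

lemma cover: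
  fixes \<Omega> :: "'a::euclidean_space set"
  assumes "bounded \<Omega>" "z0 \<in> \<Omega>" "diameter \<Omega> \<le> D" "\<epsilon> > 0"
  shows "\<exists>N. finite N \<and> N \<subseteq> \<Omega> \<and> real (card N) \<le> (1 + 2*D/\<epsilon>) ^ DIM('a) \<and> (\<forall>z\<in>\<Omega>. \<exists>p\<in>N. dist z p \<le> \<epsilon>)"
proof -
  let ?P = "\<lambda>c. \<exists>N. sepset \<Omega> \<epsilon> N \<and> card N = c"
  have P1: "?P 1" by (rule exI[of _ "{z0}"]) (use assms(2) in \<open>auto simp: sepset_def\<close>)
  have bnd: "\<forall>c. ?P c \<longrightarrow> c \<le> nat \<lfloor>(1 + 2*D/\<epsilon>) ^ DIM('a)\<rfloor>"
  proof (intro allI impI)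
    fix c assume "?P c"
    then obtain N where "sepset \<Omega> \<epsilon> N" "card N = c" by auto
    then have "real c \<le> (1 + 2*D/\<epsilon>) ^ DIM('a)" using sepset_card[OF assms(1-4)] by auto
    then show "c \<le> nat \<lfloor>(1 + 2*D/\<epsilon>) ^ DIM('a)\<rfloor>" by linarith
  qed
  obtain c where c: "?P c" "\<forall>y. ?P y \<longrightarrow> y \<le> c" using Nat.ex_has_greatest_nat[OF P1 bnd] by blast
  then obtain N where N: "sepset \<Omega> \<epsilon> N" "card N = c" by auto
  have "\<forall>z\<in>\<Omega>. \<exists>p\<in>N. dist z p \<le> \<epsilon>"
  proof (rule ballI, rule ccontr)
    fix z assume z: "z \<in> \<Omega>" "\<not> (\<exists>p\<in>N. dist z p \<le> \<epsilon>)"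
    then have zN: "z \<notin> N" using assms(4) by force
    have "sepset \<Omega> \<epsilon> (insert z N)"
      using N(1) z by (auto simp: sepset_def not_le dist_commute)
    moreover have "card (insert z N) = c + 1" using N zN by (simp add: sepset_def)
    ultimately show False using c(2) by fastforce
  qed
  then show ?thesis using N(1) sepset_card[OF assms N(1)] unfolding sepset_def by blast
qed

lemma group_bound:
  fixes x :: "nat \<Rightarrow> real" and h :: "'a \<Rightarrow> real" and c :: "nat \<Rightarrow> 'a"
  assumes "finite T" "\<And>i. i < n \<Longrightarrow> c i \<in> T" "\<And>p. p \<in> T \<Longrightarrow> \<bar>h p\<bar> \<le> e"
  shows "\<bar>\<Sum>i<n. x i * h (c i)\<bar> \<le> (\<Sum>p\<in>T. e * \<bar>\<Sum>i\<in>{i. i < n \<and> c i = p}. x i\<bar>)"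
proof -
  have "(\<Sum>i<n. x i * h (c i)) = (\<Sum>p\<in>T. \<Sum>i\<in>{i. i \<in> {..<n} \<and> c i = p}. x i * h (c i))"
    by (rule sum.group[symmetric]) (use assms in auto)
  also have "\<dots> = (\<Sum>p\<in>T. h p * (\<Sum>i\<in>{i. i < n \<and> c i = p}. x i))"
    by (intro sum.cong refl) (auto simp: sum_distrib_left mult.commute intro!: sum.cong)
  finally have eq: "(\<Sum>i<n. x i * h (c i)) = (\<Sum>p\<in>T. h p * (\<Sum>i\<in>{i. i < n \<and> c i = p}. x i))" .
  have "\<bar>\<Sum>p\<in>T. h p * (\<Sum>i\<in>{i. i < n \<and> c i = p}. x i)\<bar> \<le> (\<Sum>p\<in>T. \<bar>h p * (\<Sum>i\<in>{i. i < n \<and> c i = p}. x i)\<bar>)"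
    by (rule sum_abs)
  also have "\<dots> \<le> (\<Sum>p\<in>T. e * \<bar>\<Sum>i\<in>{i. i < n \<and> c i = p}. x i\<bar>)"
    by (intro sum_mono) (auto simp: abs_mult intro!: mult_right_mono assms(3))
  finally show ?thesis using eq by simp
qed

lemma card_groups:
  assumes "finite T" "\<And>i. i < n \<Longrightarrow> c i \<in> T"
  shows "(\<Sum>p\<in>T. real (card {i. i < n \<and> c i = p})) = real n"
proof -
  have "(\<Sum>p\<in>T. \<Sum>i\<in>{i. i \<in> {..<n} \<and> c i = p}. (1::real)) = (\<Sum>i\<in>{..<n}. 1)"
    by (rule sum.group) (use assms in auto)
  then show ?thesis by simp
qed

primrec chainpt :: "(nat \<Rightarrow> 'a \<Rightarrow> 'a) \<Rightarrow> nat \<Rightarrow> nat \<Rightarrow> 'a \<Rightarrow> 'a" where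
  "chainpt P K 0 y = P K y"
| "chainpt P K (Suc m) y = P (K - Suc m) (chainpt P K m y)"

lemma sum_rev1:
  fixes K :: nat and h :: "nat \<Rightarrow> real"
  shows "(\<Sum>m<K. h (K - m)) = (\<Sum>k\<in>{1..K}. h k)"
proof -
  have "(\<Sum>m<K. h (K - m)) = (\<Sum>m<K. h (Suc (K - Suc m)))"
    by (intro sum.cong refl) (simp add: Suc_diff_Suc)
  also have "\<dots> = (\<Sum>m<K. h (Suc m))" by (rule sum.nat_diff_reindex)
  also have "\<dots> = (\<Sum>k\<in>{Suc 0..K}. h k)" by (rule sum.atLeast1_atMost_eq[symmetric])
  finally show ?thesis by simp
qed

lemma chain_bound:
  fixes \<Omega> :: "'a::euclidean_space set" and z :: "nat \<Rightarrow> 'a"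
  assumes bnd: "bounded \<Omega>" and z0: "z0 \<in> \<Omega>" and diam: "diameter \<Omega> \<le> D" and Dpos: "D > 0"
    and n1: "n \<ge> 1" and zin: "\<And>i. i < n \<Longrightarrow> z i \<in> \<Omega>"
  shows "(\<integral>\<^sup>+x. (SUP f\<in>F_BL \<Omega>. ennreal (\<bar>\<Sum>i<n. x i * f (z i)\<bar> / real n)) \<partial>gauss_vec n)
    \<le> ennreal (D * (1 / sqrt n + (\<Sum>k\<in>{1..K}. 2 / 2^k * sqrt ((1 + 2^(k+1)) ^ DIM('a))) / sqrt n + 1 / 2^K))"
proof -
  let ?d = "DIM('a)"
  have "\<forall>k::nat. \<exists>N. finite N \<and> N \<subseteq> \<Omega> \<and> real (card N) \<le> (1 + 2*D/(D/2^k)) ^ ?d \<and> (\<forall>y\<in>\<Omega>. \<exists>p\<in>N. dist y p \<le> D/2^k)"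
    by (intro allI cover[OF bnd z0 diam]) (use Dpos in simp)
  define Nn where "Nn k = (SOME N. finite N \<and> N \<subseteq> \<Omega> \<and> real (card N) \<le> (1 + 2*D/(D/2^k)) ^ ?d \<and> (\<forall>y\<in>\<Omega>. \<exists>p\<in>N. dist y p \<le> D/2^k))" for k :: nat
  have Nn: "finite (Nn k) \<and> Nn k \<subseteq> \<Omega> \<and> real (card (Nn k)) \<le> (1 + 2*D/(D/2^k)) ^ ?d \<and> (\<forall>y\<in>\<Omega>. \<exists>p\<in>Nn k. dist y p \<le> D/2^k)" for k :: nat
    unfolding Nn_def by (rule someI_ex) (use \<open>\<forall>k::nat. \<exists>N. _\<close> in blast)
  define Net where "Net k = (if k = 0 then {z0} else Nn k)" for k :: nat
  have Net_fin: "finite (Net k)" for k using Nn by (simp add: Net_def)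
  have Net_sub: "Net k \<subseteq> \<Omega>" for k using Nn z0 by (simp add: Net_def)
  have Net_card: "real (card (Net k)) \<le> (1 + 2^(k+1)) ^ ?d" if "k \<ge> 1" for k
  proof -
    have "2*D/(D/2^k) = (2::real)^(k+1)" using Dpos by (simp add: field_simps)
    then show ?thesis using Nn[of k] that by (simp add: Net_def)
  qed
  have Net_cov: "\<exists>p\<in>Net k. dist y p \<le> D/2^k" if "y \<in> \<Omega>" for k y
  proof (cases "k = 0")
    case True
    have "dist y z0 \<le> D" using diameter_bounded_bound[OF bnd that z0] diam by simp
    then show ?thesis using True by (simp add: Net_def)
  next
    case False then show ?thesis using Nn that by (simp add: Net_def)
  qed
  define P where "P k y = (SOME p. p \<in> Net k \<and> dist y p \<le> D/2^k)" for k y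
  have P: "P k y \<in> Net k \<and> dist y (P k y) \<le> D/2^k" if "y \<in> \<Omega>" for k y
    unfolding P_def by (rule someI_ex) (use Net_cov[OF that] in blast)
  have cp_in: "chainpt P K m y \<in> Net (K - m)" if "y \<in> \<Omega>" "m \<le> K" for m y
    using that(2)
  proof (induction m)
    case 0 then show ?case using P[OF that(1)] by simp
  next
    case (Suc m)
    then have "chainpt P K m y \<in> \<Omega>" using Net_sub by auto
    then show ?case using P by simp
  qed
  have cpK: "chainpt P K K y = z0" if "y \<in> \<Omega>" for y
    using cp_in[OF that, of K] by (simp add: Net_def)
  define J where "J m p = {i. i < n \<and> chainpt P K m (z i) = p}" for m p
  define B where "B x = (D / real n) * \<bar>\<Sum>i\<in>{..<n}. x i\<bar>
      + (\<Sum>m<K. \<Sum>p\<in>Net (K - m). (D / 2^(K-m-1) / real n) * \<bar>\<Sum>i\<in>J m p. x i\<bar>)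
      + (\<Sum>i<n. (D / 2^K / real n) * \<bar>\<Sum>i'\<in>{i}. x i'\<bar>)" for x :: "nat \<Rightarrow> real"
  have npos: "real n > 0" using n1 by simp
  have pw: "\<bar>\<Sum>i<n. x i * f (z i)\<bar> / real n \<le> B x" if f: "f \<in> F_BL \<Omega>" for f x
  proof -
    have fb: "\<And>y. y \<in> \<Omega> \<Longrightarrow> \<bar>f y\<bar> \<le> diameter \<Omega>" and
      fl: "\<And>y1 y2. y1 \<in> \<Omega> \<Longrightarrow> y2 \<in> \<Omega> \<Longrightarrow> \<bar>f y1 - f y2\<bar> \<le> dist y1 y2"
      using f unfolding F_BL_def by auto
    define g where "g m i = f (chainpt P K m (z i))" for m i
    have tel: "f (z i) = f z0 + (\<Sum>m<K. g m i - g (Suc m) i) + (f (z i) - g 0 i)" if "i < n" for i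
      using sum_lessThan_telescope'[of "\<lambda>m. g m i" K] cpK[OF zin[OF that]] by (simp add: g_def)
    have "(\<Sum>i<n. x i * f (z i)) = (\<Sum>i<n. x i * f z0 + (\<Sum>m<K. x i * (g m i - g (Suc m) i)) + x i * (f (z i) - g 0 i))"
    proof (intro sum.cong refl)
      fix i assume "i \<in> {..<n}"
      then have "x i * f (z i) = x i * (f z0 + (\<Sum>m<K. g m i - g (Suc m) i) + (f (z i) - g 0 i))"
        using tel by simp
      also have "\<dots> = x i * f z0 + (\<Sum>m<K. x i * (g m i - g (Suc m) i)) + x i * (f (z i) - g 0 i)"
        by (simp add: distrib_left sum_distrib_left)
      finally show "x i * f (z i) = x i * f z0 + (\<Sum>m<K. x i * (g m i - g (Suc m) i)) + x i * (f (z i) - g 0 i)" .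
    qed
    also have "\<dots> = (\<Sum>i<n. x i * f z0) + (\<Sum>i<n. \<Sum>m<K. x i * (g m i - g (Suc m) i)) + (\<Sum>i<n. x i * (f (z i) - g 0 i))"
      by (simp only: sum.distrib)
    also have "(\<Sum>i<n. \<Sum>m<K. x i * (g m i - g (Suc m) i)) = (\<Sum>m<K. \<Sum>i<n. x i * (g m i - g (Suc m) i))"
      by (rule sum.swap)
    also have "(\<Sum>i<n. x i * f z0) = f z0 * (\<Sum>i<n. x i)"
      by (simp add: sum_distrib_left mult.commute)
    finally have eq: "(\<Sum>i<n. x i * f (z i)) = f z0 * (\<Sum>i<n. x i) + (\<Sum>m<K. \<Sum>i<n. x i * (g m i - g (Suc m) i)) + (\<Sum>i<n. x i * (f (z i) - g 0 i))" .
    have t1: "\<bar>f z0 * (\<Sum>i<n. x i)\<bar> \<le> D * \<bar>\<Sum>i<n. x i\<bar>"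
      using fb[OF z0] diam by (simp add: abs_mult mult_right_mono)
    have t2: "\<bar>\<Sum>i<n. x i * (g m i - g (Suc m) i)\<bar> \<le> (\<Sum>p\<in>Net (K - m). D / 2^(K-m-1) * \<bar>\<Sum>i\<in>J m p. x i\<bar>)"
      if m: "m < K" for m
    proof -
      define h where "h p = f p - f (P (K - Suc m) p)" for p
      have "(\<Sum>i<n. x i * (g m i - g (Suc m) i)) = (\<Sum>i<n. x i * h (chainpt P K m (z i)))"
        by (simp add: g_def h_def)
      moreover have "\<bar>\<Sum>i<n. x i * h (chainpt P K m (z i))\<bar> \<le> (\<Sum>p\<in>Net (K - m). D / 2^(K-m-1) * \<bar>\<Sum>i\<in>{i. i < n \<and> chainpt P K m (z i) = p}. x i\<bar>)"
      proof (rule group_bound[OF Net_fin])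
        show "chainpt P K m (z i) \<in> Net (K - m)" if "i < n" for i using cp_in zin that m by simp
        show "\<bar>h p\<bar> \<le> D / 2^(K-m-1)" if p: "p \<in> Net (K - m)" for p
        proof -
          have pO: "p \<in> \<Omega>" using p Net_sub by auto
          have "\<bar>h p\<bar> \<le> dist p (P (K - Suc m) p)"
            unfolding h_def using fl[OF pO] P[OF pO] Net_sub by blast
          also have "\<dots> \<le> D / 2^(K - Suc m)" using P[OF pO] by blast
          finally show ?thesis by simp
        qed
      qed
      ultimately show ?thesis by (simp add: J_def)
    qed
    have t3: "\<bar>\<Sum>i<n. x i * (f (z i) - g 0 i)\<bar> \<le> (\<Sum>i<n. D / 2^K * \<bar>x i\<bar>)"
    proof -
      have "\<bar>\<Sum>i<n. x i * (f (z i) - g 0 i)\<bar> \<le> (\<Sum>i<n. \<bar>x i * (f (z i) - g 0 i)\<bar>)" by (rule sum_abs)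
      also have "\<dots> \<le> (\<Sum>i<n. D / 2^K * \<bar>x i\<bar>)"
      proof (intro sum_mono)
        fix i assume "i \<in> {..<n}"
        then have zi: "z i \<in> \<Omega>" using zin by simp
        have "\<bar>f (z i) - g 0 i\<bar> \<le> dist (z i) (P K (z i))"
          unfolding g_def using fl[OF zi] P[OF zi] Net_sub by auto
        also have "\<dots> \<le> D / 2^K" using P[OF zi] by blast
        finally have "\<bar>f (z i) - g 0 i\<bar> \<le> D / 2^K" .
        then have "\<bar>x i\<bar> * \<bar>f (z i) - g 0 i\<bar> \<le> \<bar>x i\<bar> * (D / 2^K)" by (rule mult_left_mono) simp
        then show "\<bar>x i * (f (z i) - g 0 i)\<bar> \<le> D / 2^K * \<bar>x i\<bar>"
          by (simp add: abs_mult mult.commute)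
      qed
      finally show ?thesis .
    qed
    have "\<bar>\<Sum>i<n. x i * f (z i)\<bar> \<le> D * \<bar>\<Sum>i<n. x i\<bar> + (\<Sum>m<K. \<Sum>p\<in>Net (K - m). D / 2^(K-m-1) * \<bar>\<Sum>i\<in>J m p. x i\<bar>) + (\<Sum>i<n. D / 2^K * \<bar>x i\<bar>)"
    proof -
      have "\<bar>\<Sum>m<K. \<Sum>i<n. x i * (g m i - g (Suc m) i)\<bar> \<le> (\<Sum>m<K. \<bar>\<Sum>i<n. x i * (g m i - g (Suc m) i)\<bar>)"
        by (rule sum_abs)
      also have "\<dots> \<le> (\<Sum>m<K. \<Sum>p\<in>Net (K - m). D / 2^(K-m-1) * \<bar>\<Sum>i\<in>J m p. x i\<bar>)"
        by (intro sum_mono t2) simp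
      finally have "\<bar>\<Sum>m<K. \<Sum>i<n. x i * (g m i - g (Suc m) i)\<bar> \<le> \<dots>" .
      then show ?thesis unfolding eq using t1 t3 by linarith
    qed
    then have "\<bar>\<Sum>i<n. x i * f (z i)\<bar> / real n \<le> (D * \<bar>\<Sum>i<n. x i\<bar> + (\<Sum>m<K. \<Sum>p\<in>Net (K - m). D / 2^(K-m-1) * \<bar>\<Sum>i\<in>J m p. x i\<bar>) + (\<Sum>i<n. D / 2^K * \<bar>x i\<bar>)) / real n"
      using npos by (simp add: divide_right_mono)
    also have "\<dots> = B x"
      unfolding B_def using npos by (simp add: add_divide_distrib sum_divide_distrib)
    finally show ?thesis .
  qed
  define c where "c m = D / 2^(K-m-1) / real n" for m :: nat
  have c0: "c m \<ge> 0" for m using Dpos npos by (simp add: c_def)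
  have Jsub: "J m p \<subseteq> {..<n}" for m p by (auto simp: J_def)
  define B1 where "B1 x = (\<Sum>j\<in>{0::nat}. (D / real n) * \<bar>\<Sum>i\<in>{..<n}. x i\<bar>)" for x :: "nat \<Rightarrow> real"
  define B2 where "B2 m x = (\<Sum>p\<in>Net (K - m). c m * \<bar>\<Sum>i\<in>J m p. x i\<bar>)" for m and x :: "nat \<Rightarrow> real"
  define B3 where "B3 x = (\<Sum>i\<in>{..<n}. (D / 2^K / real n) * \<bar>\<Sum>i'\<in>{i}. x i'\<bar>)" for x :: "nat \<Rightarrow> real"
  have Bsplit: "B x = B1 x + (\<Sum>m<K. B2 m x) + B3 x" for x
    by (simp add: B_def B1_def B2_def B3_def c_def)
  have E1: "(\<lambda>x. ennreal (B1 x)) \<in> borel_measurable (gauss_vec n)"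
       "(\<integral>\<^sup>+x. ennreal (B1 x) \<partial>gauss_vec n) \<le> ennreal (\<Sum>j\<in>{0::nat}. (D / real n) * sqrt (real (card {..<n})))"
    unfolding B1_def using Dpos npos by (intro E_lin; simp)+
  have E2: "(\<lambda>x. ennreal (B2 m x)) \<in> borel_measurable (gauss_vec n)"
       "(\<integral>\<^sup>+x. ennreal (B2 m x) \<partial>gauss_vec n) \<le> ennreal (\<Sum>p\<in>Net (K - m). c m * sqrt (real (card (J m p))))" for m
    unfolding B2_def using c0 Net_fin Jsub by (intro E_lin; simp)+
  have E3: "(\<lambda>x. ennreal (B3 x)) \<in> borel_measurable (gauss_vec n)"
       "(\<integral>\<^sup>+x. ennreal (B3 x) \<partial>gauss_vec n) \<le> ennreal (\<Sum>i\<in>{..<n}. (D / 2^K / real n) * sqrt (real (card {i})))"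
    unfolding B3_def using Dpos npos by (intro E_lin; simp)+
  have B1nn: "B1 x \<ge> 0" for x using Dpos npos by (simp add: B1_def)
  have B2nn: "B2 m x \<ge> 0" for m x using c0 by (simp add: B2_def sum_nonneg)
  have B3nn: "B3 x \<ge> 0" for x using Dpos npos by (simp add: B3_def sum_nonneg)
  have "(\<integral>\<^sup>+x. (SUP f\<in>F_BL \<Omega>. ennreal (\<bar>\<Sum>i<n. x i * f (z i)\<bar> / real n)) \<partial>gauss_vec n)
      \<le> (\<integral>\<^sup>+x. ennreal (B x) \<partial>gauss_vec n)"
    by (intro nn_integral_mono SUP_least ennreal_leI pw)
  also have "\<dots> = (\<integral>\<^sup>+x. ennreal (B1 x) + ((\<Sum>m<K. ennreal (B2 m x)) + ennreal (B3 x)) \<partial>gauss_vec n)"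
  proof (intro nn_integral_cong)
    fix x :: "nat \<Rightarrow> real"
    have s2: "(\<Sum>m<K. ennreal (B2 m x)) = ennreal (\<Sum>m<K. B2 m x)"
      using B2nn by (simp add: sum_ennreal)
    have "ennreal (B x) = ennreal (B1 x + ((\<Sum>m<K. B2 m x) + B3 x))" by (simp add: Bsplit add.assoc)
    also have "\<dots> = ennreal (B1 x) + (ennreal (\<Sum>m<K. B2 m x) + ennreal (B3 x))"
      using B1nn B2nn B3nn by (simp add: ennreal_plus sum_nonneg)
    finally show "ennreal (B x) = ennreal (B1 x) + ((\<Sum>m<K. ennreal (B2 m x)) + ennreal (B3 x))"
      by (simp only: s2)
  qed
  also have "\<dots> = (\<integral>\<^sup>+x. ennreal (B1 x) \<partial>gauss_vec n) + ((\<Sum>m<K. \<integral>\<^sup>+x. ennreal (B2 m x) \<partial>gauss_vec n) + (\<integral>\<^sup>+x. ennreal (B3 x) \<partial>gauss_vec n))"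
    using E1(1) E2(1) E3(1)
    by (simp add: nn_integral_add nn_integral_sum borel_measurable_sum)
  also have "\<dots> \<le> ennreal (\<Sum>j\<in>{0::nat}. (D / real n) * sqrt (real (card {..<n})))
     + ((\<Sum>m<K. ennreal (\<Sum>p\<in>Net (K - m). c m * sqrt (real (card (J m p))))) + ennreal (\<Sum>i\<in>{..<n}. (D / 2^K / real n) * sqrt (real (card {i}))))"
    by (intro add_mono sum_mono E1(2) E2(2) E3(2))
  also have "\<dots> = ennreal (D / sqrt n + ((\<Sum>m<K. \<Sum>p\<in>Net (K - m). c m * sqrt (real (card (J m p)))) + D / 2^K))"
  proof -
    have a: "(\<Sum>j\<in>{0::nat}. (D / real n) * sqrt (real (card {..<n}))) = D / sqrt n"
    proof -
      have sn: "sqrt (real n) * sqrt (real n) = real n" using npos by simp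
      have "sqrt (real n) > 0" using npos by simp
      then show ?thesis using npos sn by (simp add: field_simps)
    qed
    have b: "(\<Sum>i\<in>{..<n}. (D / 2^K / real n) * sqrt (real (card {i}))) = D / 2^K"
      using npos by simp
    have nn: "(\<Sum>p\<in>Net (K - m). c m * sqrt (real (card (J m p)))) \<ge> 0" for m
      using c0 by (simp add: sum_nonneg)
    show ?thesis unfolding a b using nn Dpos npos
      by (simp add: sum_nonneg ennreal_plus[symmetric] del: ennreal_plus)
  qed
  also have "\<dots> \<le> ennreal (D * (1 / sqrt n + (\<Sum>k\<in>{1..K}. 2 / 2^k * sqrt ((1 + 2^(k+1)) ^ ?d)) / sqrt n + 1 / 2^K))"
  proof (rule ennreal_leI)
    have lev: "(\<Sum>p\<in>Net (K - m). c m * sqrt (real (card (J m p)))) \<le> D * (2 / 2^(K-m) * sqrt ((1 + 2^(K-m+1)) ^ ?d)) / sqrt n"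
      if m: "m < K" for m
    proof -
      have "(\<Sum>p\<in>Net (K - m). c m * sqrt (real (card (J m p)))) = c m * (\<Sum>p\<in>Net (K - m). sqrt (real (card (J m p))))"
        by (simp add: sum_distrib_left)
      also have "\<dots> \<le> c m * sqrt (real (card (Net (K - m))) * (\<Sum>p\<in>Net (K - m). real (card (J m p))))"
        by (intro mult_left_mono c0 sum_sqrt_le Net_fin) simp
      also have "(\<Sum>p\<in>Net (K - m). real (card (J m p))) = real n"
        unfolding J_def by (rule card_groups[OF Net_fin]) (use cp_in zin m in simp)
      also have "c m * sqrt (real (card (Net (K - m))) * real n) \<le> c m * sqrt ((1 + 2^(K-m+1)) ^ ?d * real n)"
        using Net_card[of "K - m"] m npos by (intro mult_left_mono c0 real_sqrt_le_mono mult_right_mono) auto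
      also have "c m * sqrt ((1 + 2^(K-m+1)) ^ ?d * real n) = D * (2 / 2^(K-m) * sqrt ((1 + 2^(K-m+1)) ^ ?d)) / sqrt n"
      proof -
        have p2: "(2::real)^(K-m) = 2 * 2^(K-m-1)" using m
          by (metis Suc_diff_Suc diff_Suc_1 power_Suc zero_less_diff)
        have sn: "sqrt (real n) * sqrt (real n) = real n" using npos by simp
        show ?thesis unfolding c_def p2 using npos sn
          by (simp add: real_sqrt_mult field_simps)
      qed
      finally show ?thesis .
    qed
    have "(\<Sum>m<K. \<Sum>p\<in>Net (K - m). c m * sqrt (real (card (J m p)))) \<le> (\<Sum>m<K. D * (2 / 2^(K-m) * sqrt ((1 + 2^(K-m+1)) ^ ?d)) / sqrt n)"
      by (intro sum_mono lev) simp
    also have "\<dots> = D * (\<Sum>m<K. 2 / 2^(K-m) * sqrt ((1 + 2^(K-m+1)) ^ ?d)) / sqrt n"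
      by (simp add: sum_distrib_left sum_divide_distrib)
    also have "(\<Sum>m<K. 2 / 2^(K-m) * sqrt ((1 + 2^(K-m+1)) ^ ?d)) = (\<Sum>k\<in>{1..K}. 2 / 2^k * sqrt ((1 + 2^(k+1)) ^ ?d))"
      by (rule sum_rev1[where h = "\<lambda>k. 2 / 2^k * sqrt ((1 + 2^(k+1)) ^ ?d)"])
    finally have "(\<Sum>m<K. \<Sum>p\<in>Net (K - m). c m * sqrt (real (card (J m p)))) \<le> D * (\<Sum>k\<in>{1..K}. 2 / 2^k * sqrt ((1 + 2^(k+1)) ^ ?d)) / sqrt n" .
    then show "D / sqrt n + ((\<Sum>m<K. \<Sum>p\<in>Net (K - m). c m * sqrt (real (card (J m p)))) + D / 2^K)
        \<le> D * (1 / sqrt n + (\<Sum>k\<in>{1..K}. 2 / 2^k * sqrt ((1 + 2^(k+1)) ^ ?d)) / sqrt n + 1 / 2^K)"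
      by (simp add: distrib_left)
  qed
  finally show ?thesis .
qed

definition chainval :: "nat \<Rightarrow> nat \<Rightarrow> nat \<Rightarrow> real" where
  "chainval d n K = 1 / sqrt n + (\<Sum>k\<in>{1..K}. 2 / 2^k * sqrt ((1 + 2^(k+1)) ^ d)) / sqrt n + 1 / 2^K"

definition Tn :: "nat \<Rightarrow> nat \<Rightarrow> real" where
  "Tn d n = (if d = 1 then 9 * sqrt (ln (2 * sqrt n)) / sqrt n
     else if d = 2 then 10 * ln (2 * sqrt n) powr (3/2) / sqrt n
     else 10 * sqrt (ln (2 * real n powr (1 / real d) * (real d / 2 - 1) powr (2 / real d)))
          / (real n powr (1 / real d) * (real d / 2 - 1) powr (2 / real d)))"

lemma ln2_gt: "ln (2::real) > 20/29"
proof -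
  have "ln ((272/100::real)^20) \<le> ln ((2::real)^29)"
    by (subst ln_le_cancel_iff) (simp_all add: power_divide divide_le_eq)
  moreover have "ln ((272/100::real)^20) = real 20 * ln (272/100)" by (rule ln_realpow; simp)
  moreover have "ln ((2::real)^29) = real 29 * ln 2" by (rule ln_realpow; simp)
  ultimately have "20 * ln (272/100::real) \<le> 29 * ln 2" by linarith
  with ln_272_gt_1 show ?thesis by linarith
qed

lemma geom_lt1:
  fixes r :: real assumes "0 \<le> r" "r < 1"
  shows "(\<Sum>k\<in>{1..K}. r^k) \<le> r / (1 - r)"
proof -
  have "(\<Sum>k\<in>{1..K}. r^k) = (\<Sum>k<K. r^(Suc k))" by (simp add: sum.atLeast1_atMost_eq)
  also have "\<dots> = r * (\<Sum>k<K. r^k)" by (simp add: sum_distrib_left)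
  also have "(\<Sum>k<K. r^k) = (1 - r^K) / (1 - r)" using assms sum_gp_strict[of r K] by simp
  also have "r * ((1 - r^K) / (1 - r)) \<le> r / (1 - r)"
  proof -
    have "r * ((1 - r^K) / (1 - r)) = (r - r^(K+1)) / (1 - r)" by (simp add: algebra_simps)
    also have "\<dots> \<le> r / (1 - r)" using assms by (intro divide_right_mono) auto
    finally show ?thesis .
  qed
  finally show ?thesis .
qed

lemma geom_gt1:
  fixes r :: real assumes "r > 1"
  shows "(\<Sum>k\<in>{1..K}. r^k) \<le> r^(K+1) / (r - 1)"
proof -
  have "(\<Sum>k\<in>{1..K}. r^k) = (\<Sum>k<K. r^(Suc k))" by (simp add: sum.atLeast1_atMost_eq)
  also have "\<dots> = r * (\<Sum>k<K. r^k)" by (simp add: sum_distrib_left)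
  also have "(\<Sum>k<K. r^k) = (r^K - 1) / (r - 1)" using assms geometric_sum[of r K] by simp
  also have "r * ((r^K - 1) / (r - 1)) \<le> r^(K+1) / (r - 1)"
    using assms by (simp add: field_simps)
  finally show ?thesis .
qed

lemma sqrt_ge_of_sq: "0 \<le> c \<Longrightarrow> c^2 \<le> x \<Longrightarrow> c \<le> sqrt x"
  by (metis real_le_rsqrt)

lemma real_le_pow2: "real n \<le> (2::real)^n"
proof (induction n)
  case (Suc n)
  have "(1::real) \<le> 2^n" by simp
  have "real (Suc n) = 1 + real n" by simp
  also have "\<dots> \<le> 2^n + 2^n" using Suc.IH \<open>(1::real) \<le> 2^n\<close> by linarith
  also have "\<dots> = 2^Suc n" by simp
  finally show ?case .
qed simp

lemma num1:
  assumes n1: "n \<ge> 1"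
  shows "\<exists>K. min 1 (chainval 1 n K) \<le> Tn 1 n"
proof -
  define s where "s = sqrt (real n)"
  have s1: "s \<ge> 1" using n1 by (simp add: s_def)
  have l2: "ln (2::real) > 20/29" by (rule ln2_gt)
  show ?thesis
  proof (cases "n \<le> 3")
    case True
    have "s \<le> 2" unfolding s_def using True by (simp add: real_sqrt_le_iff')
    moreover have "sqrt (ln (2 * s)) \<ge> 4/5"
    proof (rule sqrt_ge_of_sq)
      have "ln (2 * s) \<ge> ln 2" using s1 by (subst ln_le_cancel_iff) auto
      then show "(4/5)^2 \<le> ln (2 * s)" using l2 by (simp add: power2_eq_square)
    qed simp
    ultimately have "Tn 1 n \<ge> 1" unfolding Tn_def s_def[symmetric] using s1 by (simp add: field_simps)
    then show ?thesis by (intro exI[of _ 0]) simp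
  next
    case False
    then have n4: "n \<ge> 4" by simp
    define t where "t = sqrt (2::real)"
    have t0: "t > 0" and tt: "t * t = 2" by (simp_all add: t_def)
    have tlo: "t \<ge> 1414/1000" unfolding t_def by (rule sqrt_ge_of_sq) (simp_all add: power2_eq_square)
    have s52: "sqrt (5/2::real) \<le> 791/500" by (subst real_sqrt_le_iff') (simp_all add: power2_eq_square)
    have trm: "2 / 2^k * sqrt ((1 + 2^(k+1)) ^ 1) \<le> (2 * (791/500)) * (1/t)^k" if k: "k \<ge> 1" for k :: nat
    proof -
      have "(2::real)^k \<ge> 2" using k by (metis power_one_right power_increasing one_le_numeral)
      then have "1 + 2^(k+1) \<le> (5/2) * (2::real)^k" by simp
      then have "sqrt ((1 + 2^(k+1)) ^ 1) \<le> sqrt (5/2) * t^k"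
        by (simp add: t_def real_sqrt_mult[symmetric] real_sqrt_power[symmetric])
      also have "\<dots> \<le> (791/500) * t^k" using s52 t0 by (intro mult_right_mono) auto
      finally have a: "sqrt ((1 + 2^(k+1)) ^ 1) \<le> (791/500) * t^k" .
      have p: "(2::real)^k = t^k * t^k" by (simp add: tt power_mult_distrib[symmetric])
      have "2 / 2^k * sqrt ((1 + 2^(k+1)) ^ 1) \<le> 2 / 2^k * ((791/500) * t^k)"
        using a by (intro mult_left_mono) auto
      also have "\<dots> = (2 * (791/500)) * (1/t)^k" using t0 by (simp add: p power_one_over field_simps)
      finally show ?thesis .
    qed
    have "(\<Sum>k\<in>{1..n}. 2 / 2^k * sqrt ((1 + 2^(k+1)) ^ 1)) \<le> (\<Sum>k\<in>{1..n}. (2 * (791/500)) * (1/t)^k)"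
      by (intro sum_mono trm) simp
    also have "\<dots> = (2 * (791/500)) * (\<Sum>k\<in>{1..n}. (1/t)^k)" by (simp add: sum_distrib_left)
    also have "\<dots> \<le> (2 * (791/500)) * ((1/t) / (1 - 1/t))"
      using tlo t0 by (intro mult_left_mono geom_lt1) auto
    also have "(1/t) / (1 - 1/t) = 1 / (t - 1)" using t0 by (simp add: field_simps)
    also have "(2 * (791/500)) * (1 / (t - 1)) \<le> (2 * (791/500)) * (1 / (414/1000))"
      using tlo by (intro mult_left_mono divide_left_mono) auto
    finally have S: "(\<Sum>k\<in>{1..n}. 2 / 2^k * sqrt ((1 + 2^(k+1)) ^ 1)) \<le> 7643/1000" by simp
    have pn: "1 / (2::real)^n \<le> 1 / s"
    proof -
      have "s \<le> real n" unfolding s_def using n1 by (simp add: real_sqrt_le_iff' power2_eq_square)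
      also have "real n \<le> 2^n" by (rule real_le_pow2)
      finally show ?thesis using s1 by (intro divide_left_mono) auto
    qed
    have "chainval 1 n n \<le> 1 / s + (7643/1000) / s + 1 / s"
      unfolding chainval_def s_def[symmetric] using S pn s1 by (intro add_mono divide_right_mono) auto
    also have "\<dots> = (9643/1000) / s" using s1 by (simp add: field_simps)
    also have "\<dots> \<le> Tn 1 n"
    proof -
      have "ln (2 * s) \<ge> ln 4"
      proof -
        have "s \<ge> 2" unfolding s_def using n4 by (simp add: real_le_rsqrt)
        then show ?thesis by (subst ln_le_cancel_iff) auto
      qed
      moreover have "ln (4::real) = 2 * ln 2" using ln_realpow[of 2 2] by simp
      ultimately have "ln (2 * s) \<ge> (117/100)^2" using l2 by (simp add: power2_eq_square)
      then have "sqrt (ln (2 * s)) \<ge> 117/100" by (intro sqrt_ge_of_sq) auto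
      then have h: "9643/1000 \<le> 9 * sqrt (ln (2 * s))" by linarith
      have "(9643/1000) / s \<le> (9 * sqrt (ln (2 * s))) / s" using h s1 by (intro divide_right_mono) auto
      then show ?thesis unfolding Tn_def s_def[symmetric] by simp
    qed
    finally have "chainval 1 n n \<le> Tn 1 n" .
    then show ?thesis by (intro exI[of _ n] min.coboundedI2)
  qed
qed

lemma num2:
  assumes n1: "n \<ge> 1"
  shows "\<exists>K. min 1 (chainval 2 n K) \<le> Tn 2 n"
proof -
  define s where "s = sqrt (real n)"
  have s1: "s \<ge> 1" using n1 by (simp add: s_def)
  have l2: "ln (2::real) > 20/29" by (rule ln2_gt)
  show ?thesis
  proof (cases "n = 1")
    case True
    have "ln (2::real) powr (3/2) = ln 2 * sqrt (ln 2)"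
    proof -
      have "ln (2::real) powr (3/2) = ln 2 powr (1 + 1/2)" by simp
      also have "\<dots> = ln 2 * ln 2 powr (1/2)" using l2 by (subst powr_add) simp
      also have "\<dots> = ln 2 * sqrt (ln 2)" using l2 by (simp add: powr_half_sqrt)
      finally show ?thesis .
    qed
    moreover have "sqrt (ln (2::real)) \<ge> 4/5" using l2 by (intro sqrt_ge_of_sq) (auto simp: power2_eq_square)
    moreover have "(20/29) * (4/5) \<le> ln (2::real) * sqrt (ln 2)"
      by (rule mult_mono) (use l2 \<open>sqrt (ln (2::real)) \<ge> 4/5\<close> in auto)
    ultimately have "ln (2::real) powr (3/2) \<ge> (20/29) * (4/5)" by simp
    then have "Tn 2 n \<ge> 1" using True by (simp add: Tn_def)
    then show ?thesis by (intro exI[of _ 0]) simp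
  next
    case False
    then have n2: "n \<ge> 2" using n1 by simp
    have s2: "s \<ge> sqrt 2" unfolding s_def using n2 by simp
    have lns: "ln s \<ge> ln 2 / 2"
    proof -
      have "ln s \<ge> ln (sqrt 2)" using s2 s1 by (subst ln_le_cancel_iff) auto
      then show ?thesis by (simp add: ln_sqrt)
    qed
    define K where "K = nat \<lceil>log 2 s\<rceil>"
    have lg0: "log 2 s \<ge> 0" using s1 by simp
    have rK: "real K = real_of_int \<lceil>log 2 s\<rceil>" unfolding K_def using lg0 by simp
    have Kle: "real K \<le> log 2 s + 1" using rK by linarith
    have pK: "(2::real)^K \<ge> s"
    proof -
      have "s = 2 powr (log 2 s)" using s1 by simp
      also have "\<dots> \<le> 2 powr (real K)" using rK by (intro powr_mono) auto
      also have "\<dots> = 2^K" by (simp add: powr_realpow)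
      finally show ?thesis .
    qed
    have trm: "2 / 2^k * sqrt ((1 + 2^(k+1)) ^ 2) \<le> (5::real)" if k: "k \<ge> 1" for k :: nat
    proof -
      have "(2::real)^k \<ge> 2" using k by (metis power_one_right power_increasing one_le_numeral)
      have "sqrt (((1::real) + 2^(k+1)) ^ 2) = 1 + 2^(k+1)" by simp
      then have "2 / 2^k * sqrt ((1 + 2^(k+1)) ^ 2) = 2 / 2^k + (4::real)" by (simp add: field_simps)
      also have "\<dots> \<le> 5" using \<open>(2::real)^k \<ge> 2\<close> by (simp add: field_simps)
      finally show ?thesis .
    qed
    have S: "(\<Sum>k\<in>{1..K}. 2 / 2^k * sqrt ((1 + 2^(k+1)) ^ 2)) \<le> 5 * real K"
    proof -
      have "(\<Sum>k\<in>{1..K}. 2 / 2^k * sqrt ((1 + 2^(k+1)) ^ 2)) \<le> (\<Sum>k\<in>{1..K}. (5::real))"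
        by (intro sum_mono trm) simp
      then show ?thesis by simp
    qed
    have "chainval 2 n K \<le> 1 / s + (5 * real K) / s + 1 / s"
      unfolding chainval_def s_def[symmetric] using S pK s1
      by (intro add_mono divide_right_mono divide_left_mono) auto
    also have "\<dots> = (2 + 5 * real K) / s" using s1 by (simp add: field_simps)
    also have "\<dots> \<le> Tn 2 n"
    proof -
      define L where "L = ln (2 * s)"
      have L: "L = ln 2 + ln s" unfolding L_def using s1 by (simp add: ln_mult)
      have L1: "L \<ge> 1" using L lns l2 by linarith
      have "L \<le> L powr (3/2)"
      proof -
        have "L powr 1 \<le> L powr (3/2)" using L1 by (intro powr_mono) auto
        then show ?thesis using L1 by simp
      qed
      have lg: "log 2 s = ln s / ln 2" by (simp add: log_def)
      have "log 2 s \<le> (29/20) * ln s"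
      proof -
        have "ln s \<ge> 0" using s1 by simp
        then have "ln s / ln 2 \<le> ln s / (20/29)" using l2 by (intro divide_left_mono) auto
        then show ?thesis using lg by simp
      qed
      then have "2 + 5 * real K \<le> 10 * L" using Kle L lns l2 by linarith
      also have "\<dots> \<le> 10 * L powr (3/2)" using \<open>L \<le> L powr (3/2)\<close> by simp
      finally have "(2 + 5 * real K) / s \<le> (10 * L powr (3/2)) / s" using s1 by (intro divide_right_mono) auto
      then show ?thesis unfolding Tn_def s_def[symmetric] L_def by simp
    qed
    finally have "chainval 2 n K \<le> Tn 2 n" .
    then show ?thesis by (intro exI[of _ K] min.coboundedI2)
  qed
qed

lemma sqrt_pow_powr: "y > 0 \<Longrightarrow> sqrt (y ^ d) = y powr (real d / 2)"
proof -
  assume y: "y > 0"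
  have "sqrt (y ^ d) = (y powr real d) powr (1/2)" using y by (simp add: powr_half_sqrt powr_realpow)
  then show ?thesis by (simp add: powr_powr)
qed

lemma pow_powr_swap:
  assumes x: "(x::real) > 0" shows "(x ^ k) powr b = (x powr b) ^ k"
proof -
  have "(x ^ k) powr b = (x powr real k) powr b" using x by (simp add: powr_realpow)
  also have "\<dots> = x powr (b * real k)" by (simp add: powr_powr mult.commute)
  also have "\<dots> = (x powr b) powr real k" by (simp add: powr_powr)
  also have "\<dots> = (x powr b) ^ k" using x by (simp add: powr_realpow)
  finally show ?thesis .
qed

lemma Tn_ge1_aux:
  fixes M :: real assumes "M \<ge> 3/5" "M \<le> 16"
  shows "M \<le> 10 * sqrt (ln (2 * M))"
proof -
  have l2: "ln (2::real) > 20/29" by (rule ln2_gt)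
  consider "M \<le> 1" | "1 \<le> M" "M \<le> 8" | "8 \<le> M" by linarith
  then show ?thesis
  proof cases
    case 1
    have "ln (2 * M) \<ge> 1 - 1 / (2 * M)"
    proof -
      have "ln (1 / (2 * M)) \<le> 1 / (2 * M) - 1" using assms by (intro ln_le_minus_one) auto
      then show ?thesis using assms by (simp add: ln_div)
    qed
    moreover have "1 / (2 * M) \<le> 5/6" using assms by (simp add: field_simps)
    ultimately have "ln (2 * M) \<ge> (2/5)^2" by (simp add: power2_eq_square)
    then have "sqrt (ln (2 * M)) \<ge> 2/5" by (intro sqrt_ge_of_sq) auto
    then show ?thesis using 1 by linarith
  next
    case 2
    have "ln (2 * M) \<ge> ln 2" using 2 by (subst ln_le_cancel_iff) auto
    then have "ln (2 * M) \<ge> (4/5)^2" using l2 by (simp add: power2_eq_square)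
    then have "sqrt (ln (2 * M)) \<ge> 4/5" by (intro sqrt_ge_of_sq) auto
    then show ?thesis using 2 by linarith
  next
    case 3
    have "ln (2 * M) \<ge> ln (2^4)" using 3 by (subst ln_le_cancel_iff) auto
    also have "ln ((2::real)^4) = real 4 * ln 2" by (rule ln_realpow; simp)
    finally have "ln (2 * M) \<ge> (8/5)^2" using l2 by (simp add: power2_eq_square)
    then have "sqrt (ln (2 * M)) \<ge> 8/5" by (intro sqrt_ge_of_sq) auto
    then show ?thesis using assms by linarith
  qed
qed

lemma num3:
  assumes n1: "n \<ge> 1" and d3: "d \<ge> 3"
  shows "\<exists>K. min 1 (chainval d n K) \<le> Tn d n"
proof -
  have l2: "ln (2::real) > 20/29" by (rule ln2_gt)
  define a where "a = real d / 2"
  define q where "q = real d / 2 - 1"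
  have aq: "a = 1 + q" by (simp add: a_def q_def)
  have q0: "q \<ge> 1/2" using d3 by (simp add: q_def)
  define s where "s = sqrt (real n)"
  have s1: "s \<ge> 1" using n1 by (simp add: s_def)
  define M where "M = real n powr (1 / real d) * q powr (2 / real d)"
  have Tn_eq: "Tn d n = 10 * sqrt (ln (2 * M)) / M"
    using d3 by (simp add: Tn_def M_def q_def mult.assoc)
  have nd1: "real n powr (1 / real d) \<ge> 1" using n1 by (intro ge_one_powr_ge_zero) auto
  have qd: "q powr (2 / real d) \<ge> 3/5"
  proof (cases "d = 3")
    case True
    then have q12: "q = 1/2" by (simp add: q_def)
    define y where "y = (1/2::real) powr (2/3)"
    have y0: "y \<ge> 0" by (simp add: y_def)
    have "y ^ 3 = y powr real (3::nat)" using y0 by (simp add: y_def powr_realpow)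
    also have "\<dots> = (1/2::real) powr 2" by (simp add: y_def powr_powr)
    also have "\<dots> = 1/4" by (simp add: powr_numeral power2_eq_square)
    finally have "(3/5::real) ^ 3 \<le> y ^ 3" by (simp add: power3_eq_cube)
    then have "3/5 \<le> y" using y0 power_le_imp_le_base[of "3/5::real" 2 y] by (simp add: numeral_3_eq_3)
    then show ?thesis using True unfolding q12 y_def by simp
  next
    case False
    then have "q \<ge> 1" using d3 by (simp add: q_def)
    then have "q powr (2 / real d) \<ge> 1" by (intro ge_one_powr_ge_zero) auto
    then show ?thesis by simp
  qed
  have M35: "M \<ge> 3/5"
  proof -
    have "1 * (3/5) \<le> real n powr (1 / real d) * q powr (2 / real d)"
      using nd1 qd by (intro mult_mono) auto
    then show ?thesis by (simp add: M_def)
  qed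
  have M0: "M > 0" using M35 by simp
  define Mq where "Mq = M powr q"
  have Mq0: "Mq > 0" using M0 by (simp add: Mq_def)
  have sM: "s * q = M * Mq"
  proof -
    have "M powr a = (real n powr (1 / real d)) powr a * (q powr (2 / real d)) powr a"
      unfolding M_def using q0 by (intro powr_mult; simp)
    also have "(real n powr (1 / real d)) powr a = real n powr (1/2)"
      using d3 by (simp add: powr_powr a_def)
    also have "(q powr (2 / real d)) powr a = q"
      using d3 q0 by (simp add: powr_powr a_def)
    also have "real n powr (1/2) = s" by (simp add: s_def powr_half_sqrt)
    finally have "M powr a = s * q" .
    moreover have "M powr a = M * Mq" unfolding aq Mq_def using M0 by (simp add: powr_add)
    ultimately show ?thesis by simp
  qed
  show ?thesis
  proof (cases "M \<le> 16")
    case True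
    have "M \<le> 10 * sqrt (ln (2 * M))" using M35 True by (rule Tn_ge1_aux)
    then have "Tn d n \<ge> 1" unfolding Tn_eq using M0 by (simp add: field_simps)
    then show ?thesis by (intro exI[of _ 0]) simp
  next
    case False
    then have M16: "M \<ge> 16" by simp
    define K where "K = nat \<lfloor>log 2 (M / 5)\<rfloor>"
    define X where "X = (2::real)^K"
    have X0: "X > 0" by (simp add: X_def)
    have lg0: "log 2 (M / 5) \<ge> 0" using M16 by simp
    have rK: "real K = real_of_int \<lfloor>log 2 (M / 5)\<rfloor>" unfolding K_def using lg0 by simp
    have XP: "X = 2 powr (real K)" by (simp add: X_def powr_realpow)
    have Xle: "X \<le> M / 5"
    proof -
      have "X \<le> 2 powr (log 2 (M / 5))" unfolding XP using rK by (intro powr_mono) auto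
      also have "\<dots> = M / 5" using M0 by simp
      finally show ?thesis .
    qed
    have Xgt: "M / 5 < 2 * X"
    proof -
      have "M / 5 = 2 powr (log 2 (M / 5))" using M0 by simp
      also have "\<dots> < 2 powr (real K + 1)" using rK by (intro powr_less_mono) linarith+
      also have "\<dots> = 2 * X" unfolding XP by (simp add: powr_add)
      finally show ?thesis .
    qed
    define r where "r = (2::real) powr q"
    have r1: "r > 1" using q0 by (simp add: r_def)
    have rlow: "r - 1 \<ge> q * ln 2"
    proof -
      have "r = exp (q * ln 2)" by (simp add: r_def powr_def)
      moreover have "1 + q * ln 2 \<le> exp (q * ln 2)" by (rule exp_ge_add_one_self)
      ultimately show ?thesis by linarith
    qed
    define A where "A = (5/2::real) powr q"
    have A0: "A > 0" by (simp add: A_def)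
    define Xq where "Xq = X powr q"
    have trm: "2 / 2^k * sqrt ((1 + 2^(k+1)) ^ d) \<le> 5 * A * r^k" if k: "k \<ge> 1" for k :: nat
    proof -
      have p2: "(2::real)^k \<ge> 2" using k by (metis power_one_right power_increasing one_le_numeral)
      have "sqrt ((1 + 2^(k+1)) ^ d) = (1 + 2^(k+1)) powr a"
        unfolding a_def by (rule sqrt_pow_powr) (simp add: add_pos_pos)
      also have "\<dots> \<le> ((5/2) * 2^k) powr a" using p2 by (intro powr_mono2) (auto simp: a_def)
      also have "\<dots> = (5/2) powr a * (2^k) powr a" by (intro powr_mult; simp)
      also have "(2^k) powr a = (2 powr a)^k" by (rule pow_powr_swap; simp)
      also have "(2::real) powr a = 2 * r" unfolding aq r_def by (simp add: powr_add)
      also have "(5/2::real) powr a = (5/2) * A" unfolding aq A_def by (simp add: powr_add)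
      finally have b: "sqrt ((1 + 2^(k+1)) ^ d) \<le> (5/2) * A * (2 * r)^k" .
      have "2 / 2^k * sqrt ((1 + 2^(k+1)) ^ d) \<le> 2 / 2^k * ((5/2) * A * (2 * r)^k)"
        using b by (intro mult_left_mono) auto
      also have "\<dots> = 5 * A * r^k" by (simp add: power_mult_distrib field_simps)
      finally show ?thesis .
    qed
    have rK2: "r^K = Xq"
      unfolding r_def Xq_def X_def by (rule pow_powr_swap[symmetric]; simp)
    have AX: "A * Xq \<le> Mq / r"
    proof -
      have "A * Xq = ((5/2) * X) powr q" unfolding A_def Xq_def using X0 by (subst powr_mult; simp)
      also have "\<dots> \<le> (M / 2) powr q" using Xle X0 q0 by (intro powr_mono2) auto
      also have "\<dots> = Mq / r" unfolding Mq_def r_def using M0 by (simp add: powr_divide)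
      finally show ?thesis .
    qed
    have S: "(\<Sum>k\<in>{1..K}. 2 / 2^k * sqrt ((1 + 2^(k+1)) ^ d)) \<le> 5 * Mq / (r - 1)"
    proof -
      have "(\<Sum>k\<in>{1..K}. 2 / 2^k * sqrt ((1 + 2^(k+1)) ^ d)) \<le> (\<Sum>k\<in>{1..K}. 5 * A * r^k)"
        by (intro sum_mono trm) simp
      also have "\<dots> = 5 * A * (\<Sum>k\<in>{1..K}. r^k)" by (simp add: sum_distrib_left)
      also have "\<dots> \<le> 5 * A * (r^(K+1) / (r - 1))"
        using A0 r1 by (intro mult_left_mono geom_gt1) auto
      also have "\<dots> = 5 * r * (A * Xq) / (r - 1)" by (simp add: rK2[symmetric] field_simps)
      also have "\<dots> \<le> 5 * r * (Mq / r) / (r - 1)"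
        using AX r1 by (intro divide_right_mono mult_left_mono) auto
      also have "\<dots> = 5 * Mq / (r - 1)" using r1 by simp
      finally show ?thesis .
    qed
    have lnM: "ln M \<ge> 2"
    proof -
      have "ln M \<ge> ln (2^4)" using M16 by (subst ln_le_cancel_iff) auto
      also have "ln ((2::real)^4) = real 4 * ln 2" by (rule ln_realpow; simp)
      finally show ?thesis using l2 by simp
    qed
    have Mq2: "Mq \<ge> 2 * q"
    proof -
      have "Mq = exp (q * ln M)" using M0 by (simp add: Mq_def powr_def)
      moreover have "1 + q * ln M \<le> exp (q * ln M)" by (rule exp_ge_add_one_self)
      moreover have "q * ln M \<ge> q * 2" using lnM q0 by (intro mult_left_mono) auto
      ultimately show ?thesis by linarith
    qed
    have s2M: "s \<ge> 2 * M"
    proof -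
      have "s * q \<ge> 2 * M * q" using sM Mq2 M0 by (simp add: mult_left_mono mult.assoc)
      then show ?thesis using q0 by simp
    qed
    have t1: "1 / s \<le> (1/2) / M" using s2M M0 by (simp add: field_simps)
    have t2: "(\<Sum>k\<in>{1..K}. 2 / 2^k * sqrt ((1 + 2^(k+1)) ^ d)) / s \<le> (29/4) / M"
    proof -
      have "(\<Sum>k\<in>{1..K}. 2 / 2^k * sqrt ((1 + 2^(k+1)) ^ d)) / s \<le> (5 * Mq / (r - 1)) / s"
        using S s1 by (intro divide_right_mono) auto
      also have "\<dots> = 5 * q / ((r - 1) * M)"
      proof -
        have se: "s = M * Mq / q" using sM q0 by (simp add: field_simps)
        have "r - 1 \<noteq> 0" "M \<noteq> 0" "Mq \<noteq> 0" "q \<noteq> 0" using Mq0 M0 q0 r1 by auto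
        then show ?thesis unfolding se by (simp add: field_simps)
      qed
      also have "\<dots> \<le> 5 * q / (q * ln 2 * M)"
      proof -
        have pos: "0 < q * ln 2 * M" using q0 M0 l2 by simp
        have pos2: "0 < (r - 1) * M * (q * ln 2 * M)" using r1 M0 pos by simp
        show ?thesis using rlow q0 M0 l2 pos pos2 by (intro divide_left_mono mult_right_mono) auto
      qed
      also have "\<dots> = (5 / ln 2) / M" using q0 by (simp add: field_simps)
      also have "\<dots> \<le> (29/4) / M"
      proof -
        have "5 / ln 2 \<le> 5 / (20/29::real)" using l2 by (intro divide_left_mono) auto
        then show ?thesis using M0 by (intro divide_right_mono) auto
      qed
      finally show ?thesis .
    qed
    have t3: "1 / X \<le> 10 / M" using Xgt X0 M0 by (simp add: field_simps)
    have "chainval d n K \<le> (1/2) / M + (29/4) / M + 10 / M"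
      unfolding chainval_def s_def[symmetric] X_def[symmetric] using t1 t2 t3 by linarith
    also have "\<dots> = (71/4) / M" by (simp add: field_simps)
    also have "\<dots> \<le> Tn d n"
    proof -
      have "ln (2 * M) \<ge> ln (2^5)" using M16 by (subst ln_le_cancel_iff) auto
      also have "ln ((2::real)^5) = real 5 * ln 2" by (rule ln_realpow; simp)
      finally have "ln (2 * M) \<ge> (71/40)^2" using l2 by (simp add: power2_eq_square)
      then have "sqrt (ln (2 * M)) \<ge> 71/40" by (intro sqrt_ge_of_sq) auto
      then have "71/4 \<le> 10 * sqrt (ln (2 * M))" by linarith
      then show ?thesis unfolding Tn_eq using M0 by (intro divide_right_mono) auto
    qed
    finally have "chainval d n K \<le> Tn d n" .
    then show ?thesis by (intro exI[of _ K] min.coboundedI2)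
  qed
qed

lemma numeric: "d \<ge> 1 \<Longrightarrow> n \<ge> 1 \<Longrightarrow> \<exists>K. min 1 (chainval d n K) \<le> Tn d n"
proof -
  assume d1: "d \<ge> 1" and n1: "n \<ge> 1"
  consider "d = 1" | "d = 2" | "d \<ge> 3" using d1 by linarith
  then show ?thesis
  proof cases
    case 1 then show ?thesis using num1[OF n1] by simp
  next
    case 2 then show ?thesis using num2[OF n1] by simp
  next
    case 3 then show ?thesis using num3[OF n1] by simp
  qed
qed

lemma trivial_bound:
  fixes \<Omega> :: "'a::euclidean_space set" and z :: "nat \<Rightarrow> 'a"
  assumes bnd: "bounded \<Omega>" and diam: "diameter \<Omega> \<le> D" and n1: "n \<ge> 1" and zin: "\<And>i. i < n \<Longrightarrow> z i \<in> \<Omega>"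
  shows "(\<integral>\<^sup>+x. (SUP f\<in>F_BL \<Omega>. ennreal (\<bar>\<Sum>i<n. x i * f (z i)\<bar> / real n)) \<partial>gauss_vec n) \<le> ennreal D"
proof -
  have npos: "real n > 0" using n1 by simp
  have D0: "D \<ge> 0" using diameter_ge_0[OF bnd] diam by linarith
  have pw: "\<bar>\<Sum>i<n. x i * f (z i)\<bar> / real n \<le> (\<Sum>i\<in>{..<n}. (D / real n) * \<bar>\<Sum>i'\<in>{i}. x i'\<bar>)"
    if f: "f \<in> F_BL \<Omega>" for f x
  proof -
    have "\<bar>\<Sum>i<n. x i * f (z i)\<bar> \<le> (\<Sum>i<n. \<bar>x i * f (z i)\<bar>)" by (rule sum_abs)
    also have "\<dots> \<le> (\<Sum>i<n. D * \<bar>x i\<bar>)"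
    proof (rule sum_mono)
      fix i assume "i \<in> {..<n}"
      then have "\<bar>f (z i)\<bar> \<le> D" using f zin diam unfolding F_BL_def by force
      then have "\<bar>x i\<bar> * \<bar>f (z i)\<bar> \<le> \<bar>x i\<bar> * D" by (rule mult_left_mono) simp
      then show "\<bar>x i * f (z i)\<bar> \<le> D * \<bar>x i\<bar>" by (simp add: abs_mult mult.commute)
    qed
    finally have "\<bar>\<Sum>i<n. x i * f (z i)\<bar> / real n \<le> (\<Sum>i<n. D * \<bar>x i\<bar>) / real n"
      using npos by (simp add: divide_right_mono)
    also have "\<dots> = (\<Sum>i\<in>{..<n}. (D / real n) * \<bar>\<Sum>i'\<in>{i}. x i'\<bar>)"
      by (simp add: sum_divide_distrib)
    finally show ?thesis .
  qed
  have "(\<integral>\<^sup>+x. (SUP f\<in>F_BL \<Omega>. ennreal (\<bar>\<Sum>i<n. x i * f (z i)\<bar> / real n)) \<partial>gauss_vec n)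
      \<le> (\<integral>\<^sup>+x. ennreal (\<Sum>i\<in>{..<n}. (D / real n) * \<bar>\<Sum>i'\<in>{i}. x i'\<bar>) \<partial>gauss_vec n)"
    by (intro nn_integral_mono SUP_least ennreal_leI pw)
  also have "\<dots> \<le> ennreal (\<Sum>i\<in>{..<n}. (D / real n) * sqrt (real (card {i})))"
    using D0 npos by (intro E_lin) auto
  also have "(\<Sum>i\<in>{..<n}. (D / real n) * sqrt (real (card {i}))) = D" using npos by simp
  finally show ?thesis .
qed

theorem mainTheorem9:
  fixes \<Omega> :: "'a::euclidean_space set" and D :: real and n :: nat
  assumes "bounded \<Omega>" and "diameter \<Omega> \<le> D" and "n \<ge> 1"
  shows "gaussian_complexity n (F_BL \<Omega>) \<Omega> \<le> ennreal
    (if DIM('a) = 1 then 9 * sqrt (ln (2 * sqrt n)) * D / sqrt n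
     else if DIM('a) = 2 then 10 * D * ln (2 * sqrt n) powr (3/2) / sqrt n
     else 10 * D * sqrt (ln (2 * real n powr (1 / real DIM('a)) * (real DIM('a) / 2 - 1) powr (2 / real DIM('a))))
          / (real n powr (1 / real DIM('a)) * (real DIM('a) / 2 - 1) powr (2 / real DIM('a))))"
proof -
  let ?d = "DIM('a)"
  have tgt: "(if DIM('a) = 1 then 9 * sqrt (ln (2 * sqrt n)) * D / sqrt n
     else if DIM('a) = 2 then 10 * D * ln (2 * sqrt n) powr (3/2) / sqrt n
     else 10 * D * sqrt (ln (2 * real n powr (1 / real DIM('a)) * (real DIM('a) / 2 - 1) powr (2 / real DIM('a))))
          / (real n powr (1 / real DIM('a)) * (real DIM('a) / 2 - 1) powr (2 / real DIM('a))))
     = D * Tn ?d n"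
    by (simp add: Tn_def)
  show ?thesis
  proof (cases "\<Omega> = {}")
    case True
    then have "{..<n} \<rightarrow>\<^sub>E \<Omega> = {}" using assms(3) by (auto simp: PiE_def Pi_def)
    then show ?thesis by (simp add: gaussian_complexity_def)
  next
    case False
    then obtain z0 where z0: "z0 \<in> \<Omega>" by auto
    have D0: "D \<ge> 0" using diameter_ge_0[OF assms(1)] assms(2) by linarith
    obtain K where K: "min 1 (chainval ?d n K) \<le> Tn ?d n"
      using numeric[of ?d n] assms(3) by (auto simp: DIM_positive Suc_le_eq)
    show ?thesis unfolding gaussian_complexity_def tgt
    proof (rule SUP_least)
      fix z assume z: "z \<in> {..<n} \<rightarrow>\<^sub>E \<Omega>"
      have zin: "\<And>i. i < n \<Longrightarrow> z i \<in> \<Omega>" using z by auto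
      have tb: "(\<integral>\<^sup>+x. (SUP f\<in>F_BL \<Omega>. ennreal (\<bar>\<Sum>i<n. x i * f (z i)\<bar> / real n)) \<partial>gauss_vec n) \<le> ennreal D"
        by (rule trivial_bound[OF assms(1,2,3) zin])
      have "(\<integral>\<^sup>+x. (SUP f\<in>F_BL \<Omega>. ennreal (\<bar>\<Sum>i<n. x i * f (z i)\<bar> / real n)) \<partial>gauss_vec n) \<le> ennreal (D * min 1 (chainval ?d n K))"
      proof (cases "D = 0")
        case True then show ?thesis using tb by simp
      next
        case False
        then have Dp: "D > 0" using D0 by simp
        have cb: "(\<integral>\<^sup>+x. (SUP f\<in>F_BL \<Omega>. ennreal (\<bar>\<Sum>i<n. x i * f (z i)\<bar> / real n)) \<partial>gauss_vec n) \<le> ennreal (D * chainval ?d n K)"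
          unfolding chainval_def by (rule chain_bound[OF assms(1) z0 assms(2) Dp assms(3) zin])
        show ?thesis
        proof (cases "chainval ?d n K \<le> 1")
          case True then show ?thesis using cb by simp
        next
          case False then show ?thesis using tb by simp
        qed
      qed
      also have "\<dots> \<le> ennreal (D * Tn ?d n)"
        using K D0 by (intro ennreal_leI mult_left_mono)
      finally show "(\<integral>\<^sup>+x. (SUP f\<in>F_BL \<Omega>. ennreal (\<bar>\<Sum>i<n. x i * f (z i)\<bar> / real n)) \<partial>gauss_vec n) \<le> ennreal (D * Tn ?d n)" .
    qed
  qed
qed

end
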